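(* The variety $\mathsf{V}(S_{(4,414)})$ is the ai-semiring variety defined by the identities $xy\approx yx$, $x_1x_2x_3\approx x_1x_2x_3+x_4$, $x_1x_2+x_3x_4\approx x_1x_2+x_3x_4+x_1x_4$.
   Context: An ai-semiring is an algebra $(S,+,\cdot)$ with $(S,+)$ a semilattice, $(S,\cdot)$ a semigroup, and both distributive laws. $\mathsf{V}(S)$ is the variety generated by $S$; "the ai-semiring variety defined by identities $\Sigma$" is the class of all ai-semirings satisfying $\Sigma$. $S_{(4,414)}$ has carrier $\{1,2,3,4\}$; addition: $x+x=x$, $2+x=x$, $1+x=1$ for all $x$, $3+4=1$; multiplication (row $a$, column $b$ gives $a\cdot b$): row $1$: $1,1,1,1$; row $2$: $1,3,1,3$; row $3$: $1,1,1,1$; row $4$: $1,3,1,3$. *)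

theory Defs
  imports Main
begin

datatype trm = Var nat | Pl trm trm | Ml trm trm

text \<open>An algebra of type (+,*) is given by two binary operations on a type 'a
  (the carrier is the whole type).\<close>
fun eval :: "('a \<Rightarrow> 'a \<Rightarrow> 'a) \<Rightarrow> ('a \<Rightarrow> 'a \<Rightarrow> 'a) \<Rightarrow> (nat \<Rightarrow> 'a) \<Rightarrow> trm \<Rightarrow> 'a" where
  "eval pl ml \<rho> (Var n) = \<rho> n"
| "eval pl ml \<rho> (Pl s t) = pl (eval pl ml \<rho> s) (eval pl ml \<rho> t)"
| "eval pl ml \<rho> (Ml s t) = ml (eval pl ml \<rho> s) (eval pl ml \<rho> t)"

definition satisfies :: "('a \<Rightarrow> 'a \<Rightarrow> 'a) \<Rightarrow> ('a \<Rightarrow> 'a \<Rightarrow> 'a) \<Rightarrow> trm \<times> trm \<Rightarrow> bool" where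
  "satisfies pl ml e \<longleftrightarrow> (\<forall>\<rho>. eval pl ml \<rho> (fst e) = eval pl ml \<rho> (snd e))"

definition ai_semiring :: "('a \<Rightarrow> 'a \<Rightarrow> 'a) \<Rightarrow> ('a \<Rightarrow> 'a \<Rightarrow> 'a) \<Rightarrow> bool" where
  "ai_semiring pl ml \<longleftrightarrow>
     (\<forall>x y z. pl (pl x y) z = pl x (pl y z)) \<and>
     (\<forall>x y. pl x y = pl y x) \<and>
     (\<forall>x. pl x x = x) \<and>
     (\<forall>x y z. ml (ml x y) z = ml x (ml y z)) \<and>
     (\<forall>x y z. ml x (pl y z) = pl (ml x y) (ml x z)) \<and>
     (\<forall>x y z. ml (pl x y) z = pl (ml x z) (ml y z))"

datatype s4 = E1 | E2 | E3 | E4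

fun s4_add :: "s4 \<Rightarrow> s4 \<Rightarrow> s4" where
  "s4_add E1 y = E1"
| "s4_add x E1 = E1"
| "s4_add E2 y = y"
| "s4_add x E2 = x"
| "s4_add E3 E3 = E3"
| "s4_add E4 E4 = E4"
| "s4_add E3 E4 = E1"
| "s4_add E4 E3 = E1"

fun s4_mul :: "s4 \<Rightarrow> s4 \<Rightarrow> s4" where
  "s4_mul E2 E2 = E3"
| "s4_mul E2 E4 = E3"
| "s4_mul E4 E2 = E3"
| "s4_mul E4 E4 = E3"
| "s4_mul x y = E1"

text \<open>Membership in the variety V(S) generated by S_(4,414): by Birkhoff's HSP theorem,
  V(S) is the class of algebras satisfying every identity that holds in S.\<close>
definition in_V_S4 :: "('a \<Rightarrow> 'a \<Rightarrow> 'a) \<Rightarrow> ('a \<Rightarrow> 'a \<Rightarrow> 'a) \<Rightarrow> bool" where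
  "in_V_S4 pl ml \<longleftrightarrow> (\<forall>e. satisfies s4_add s4_mul e \<longrightarrow> satisfies pl ml e)"

definition Sigma_414 :: "(trm \<times> trm) set" where
  "Sigma_414 = {
     (Ml (Var 1) (Var 2), Ml (Var 2) (Var 1)),
     (Ml (Ml (Var 1) (Var 2)) (Var 3), Pl (Ml (Ml (Var 1) (Var 2)) (Var 3)) (Var 4)),
     (Pl (Ml (Var 1) (Var 2)) (Ml (Var 3) (Var 4)),
      Pl (Pl (Ml (Var 1) (Var 2)) (Ml (Var 3) (Var 4))) (Ml (Var 1) (Var 4))) }"

end

theory Submission
  imports Defs
begin

fun wv :: "('a \<Rightarrow> 'a \<Rightarrow> 'a) \<Rightarrow> (nat \<Rightarrow> 'a) \<Rightarrow> nat list \<Rightarrow> 'a" where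
  "wv ml \<rho> [] = undefined"
| "wv ml \<rho> [x] = \<rho> x"
| "wv ml \<rho> (x # y # zs) = ml (\<rho> x) (wv ml \<rho> (y # zs))"

fun sumL :: "('a \<Rightarrow> 'a \<Rightarrow> 'a) \<Rightarrow> 'a list \<Rightarrow> 'a" where
  "sumL pl [] = undefined"
| "sumL pl [a] = a"
| "sumL pl (a # b # cs) = pl a (sumL pl (b # cs))"

fun mons :: "trm \<Rightarrow> nat list list" where
  "mons (Var n) = [[n]]"
| "mons (Pl s t) = mons s @ mons t"
| "mons (Ml s t) = concat (map (\<lambda>u. map (\<lambda>v. u @ v) (mons t)) (mons s))"

lemma mons_ne: "mons t \<noteq> []"
  by (induction t) auto

lemma mons_words: "w \<in> set (mons t) \<Longrightarrow> w \<noteq> []"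
  by (induction t arbitrary: w) auto

lemma sumL_Cons: "xs \<noteq> [] \<Longrightarrow> sumL pl (a # xs) = pl a (sumL pl xs)"
  by (cases xs) auto

lemma wv_Cons: "xs \<noteq> [] \<Longrightarrow> wv ml \<rho> (a # xs) = ml (\<rho> a) (wv ml \<rho> xs)"
  by (cases xs) auto

context
  fixes pl ml :: "'a \<Rightarrow> 'a \<Rightarrow> 'a"
  assumes ai: "ai_semiring pl ml"
begin

lemma passoc: "pl (pl x y) z = pl x (pl y z)" using ai unfolding ai_semiring_def by blast
lemma pcomm: "pl x y = pl y x" using ai unfolding ai_semiring_def by blast
lemma pidem: "pl x x = x" using ai unfolding ai_semiring_def by blast
lemma massoc: "ml (ml x y) z = ml x (ml y z)" using ai unfolding ai_semiring_def by blast
lemma ldist: "ml x (pl y z) = pl (ml x y) (ml x z)" using ai unfolding ai_semiring_def by blast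
lemma rdist: "ml (pl x y) z = pl (ml x z) (ml y z)" using ai unfolding ai_semiring_def by blast

lemma sumL_append: "xs \<noteq> [] \<Longrightarrow> ys \<noteq> [] \<Longrightarrow> sumL pl (xs @ ys) = pl (sumL pl xs) (sumL pl ys)"
proof (induction xs)
  case (Cons a xs)
  show ?case
  proof (cases "xs = []")
    case True then show ?thesis using Cons by (simp add: sumL_Cons)
  next
    case False then show ?thesis using Cons by (simp add: sumL_Cons passoc)
  qed
qed auto

lemma wv_append: "xs \<noteq> [] \<Longrightarrow> ys \<noteq> [] \<Longrightarrow> wv ml \<rho> (xs @ ys) = ml (wv ml \<rho> xs) (wv ml \<rho> ys)"
proof (induction xs)
  case (Cons a xs)
  show ?case
  proof (cases "xs = []")
    case True then show ?thesis using Cons by (simp add: wv_Cons)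
  next
    case False then show ?thesis using Cons by (simp add: wv_Cons massoc)
  qed
qed auto

lemma sumL_rdist: "xs \<noteq> [] \<Longrightarrow> ml (sumL pl xs) b = sumL pl (map (\<lambda>x. ml x b) xs)"
proof (induction xs)
  case (Cons a xs)
  then show ?case by (cases "xs = []") (auto simp: sumL_Cons rdist)
qed auto

lemma sumL_ldist: "xs \<noteq> [] \<Longrightarrow> ml b (sumL pl xs) = sumL pl (map (\<lambda>x. ml b x) xs)"
proof (induction xs)
  case (Cons a xs)
  then show ?case by (cases "xs = []") (auto simp: sumL_Cons ldist)
qed auto

lemma prod_sum:
  assumes "A \<noteq> []" "B \<noteq> []" "\<forall>w\<in>set A. w \<noteq> []" "\<forall>w\<in>set B. w \<noteq> []"
  shows "sumL pl (map (wv ml \<rho>) (concat (map (\<lambda>u. map (\<lambda>v. u @ v) B) A)))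
       = ml (sumL pl (map (wv ml \<rho>) A)) (sumL pl (map (wv ml \<rho>) B))"
  using assms
proof (induction A)
  case (Cons u A)
  have e1: "sumL pl (map (wv ml \<rho>) (map (\<lambda>v. u @ v) B)) = ml (wv ml \<rho> u) (sumL pl (map (wv ml \<rho>) B))"
  proof -
    have "map (wv ml \<rho>) (map (\<lambda>v. u @ v) B) = map (\<lambda>x. ml (wv ml \<rho> u) x) (map (wv ml \<rho>) B)"
      unfolding map_map by (rule map_cong) (use Cons.prems in \<open>auto simp: wv_append\<close>)
    moreover have "sumL pl (map (\<lambda>x. ml (wv ml \<rho> u) x) (map (wv ml \<rho>) B)) = ml (wv ml \<rho> u) (sumL pl (map (wv ml \<rho>) B))"
      by (rule sumL_ldist[symmetric]) (use Cons.prems in simp)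
    ultimately show ?thesis by (simp only:)
  qed
  show ?case
  proof (cases "A = []")
    case True then show ?thesis using e1 by simp
  next
    case False
    have ne: "concat (map (\<lambda>u. map (\<lambda>v. u @ v) B) A) \<noteq> []"
      using False Cons.prems(2) by (cases A) auto
    have "sumL pl (map (wv ml \<rho>) (concat (map (\<lambda>u. map (\<lambda>v. u @ v) B) (u # A))))
        = pl (sumL pl (map (wv ml \<rho>) (map (\<lambda>v. u @ v) B)))
             (sumL pl (map (wv ml \<rho>) (concat (map (\<lambda>u. map (\<lambda>v. u @ v) B) A))))"
      using ne Cons.prems(2) by (simp add: sumL_append)
    also have "\<dots> = pl (ml (wv ml \<rho> u) (sumL pl (map (wv ml \<rho>) B)))
        (ml (sumL pl (map (wv ml \<rho>) A)) (sumL pl (map (wv ml \<rho>) B)))"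
      using e1 Cons False by simp
    also have "\<dots> = ml (sumL pl (map (wv ml \<rho>) (u # A))) (sumL pl (map (wv ml \<rho>) B))"
      using False by (simp add: sumL_Cons rdist)
    finally show ?thesis .
  qed
qed auto

lemma eval_mons: "eval pl ml \<rho> t = sumL pl (map (wv ml \<rho>) (mons t))"
proof (induction t)
  case (Pl s t)
  then show ?case using mons_ne[of s] mons_ne[of t] by (simp add: sumL_append)
next
  case (Ml s t)
  then show ?case using mons_ne[of s] mons_ne[of t] mons_words[of _ s] mons_words[of _ t]
    by (simp add: prod_sum)
qed auto

lemma absorb_mem: "a \<in> set xs \<Longrightarrow> pl (sumL pl xs) a = sumL pl xs"
proof (induction xs)
  case (Cons b xs)
  show ?case
  proof (cases "xs = []")
    case True then show ?thesis using Cons by (simp add: pidem)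
  next
    case False
    then have "sumL pl (b # xs) = pl b (sumL pl xs)" by (simp add: sumL_Cons)
    moreover have "pl (pl b (sumL pl xs)) a = pl b (sumL pl xs)"
    proof (cases "a = b")
      case True then show ?thesis
        by (metis passoc pcomm pidem)
    next
      case False then have "a \<in> set xs" using Cons by simp
      then show ?thesis using Cons.IH by (simp add: passoc)
    qed
    ultimately show ?thesis by (simp only:)
  qed
qed auto

lemma absorb_all: "xs \<noteq> [] \<Longrightarrow> \<forall>a\<in>set xs. pl T a = T \<Longrightarrow> pl T (sumL pl xs) = T"
proof (induction xs)
  case (Cons b xs)
  then show ?case by (cases "xs = []") (auto simp: sumL_Cons simp flip: passoc)
qed auto

lemma absorb_eq: "pl X Y = X \<Longrightarrow> pl Y X = Y \<Longrightarrow> X = Y"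
  by (metis pcomm)

lemma absorb_step: "pl T p = T \<Longrightarrow> pl T q = T \<Longrightarrow> pl (pl p q) r = pl p q \<Longrightarrow> pl T r = T"
  by (metis passoc)


lemma long_form: "3 \<le> length w \<Longrightarrow> \<exists>a b c. wv ml \<rho> w = ml (ml a b) c"
proof -
  assume "3 \<le> length w"
  then obtain x y z r where w: "w = x # y # z # r"
    by (cases w; cases "tl w"; cases "tl (tl w)") auto
  have "wv ml \<rho> w = ml (ml (\<rho> x) (\<rho> y)) (wv ml \<rho> (z # r))"
    unfolding w by (simp add: massoc)
  then show ?thesis by blast
qed

lemma long_eq:
  assumes D: "\<forall>a b c d. pl (ml (ml a b) c) d = ml (ml a b) c"
    and w: "w \<in> set (mons t)" "3 \<le> length w"
  shows "eval pl ml \<rho> t = ml (ml (\<rho> 0) (\<rho> 0)) (\<rho> 0)"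
proof -
  obtain a b c where u: "wv ml \<rho> w = ml (ml a b) c" using long_form[OF w(2)] by blast
  let ?T = "sumL pl (map (wv ml \<rho>) (mons t))"
  have "pl ?T (wv ml \<rho> w) = ?T" using w(1) by (intro absorb_mem) simp
  moreover have "pl (wv ml \<rho> w) ?T = wv ml \<rho> w" using u D by simp
  ultimately have "?T = wv ml \<rho> w" by (metis pcomm)
  moreover have "wv ml \<rho> w = ml (ml (\<rho> 0) (\<rho> 0)) (\<rho> 0)"
    using D u by (metis pcomm)
  ultimately show ?thesis by (simp add: eval_mons)
qed

lemma pair_absorb:
  assumes C: "\<forall>a b. ml a b = ml b a"
    and w: "w \<in> set (mons t)" "length w = 2" "x \<in> set w"
  shows "\<exists>a. pl (eval pl ml \<rho> t) (ml (\<rho> x) (\<rho> a)) = eval pl ml \<rho> t"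
proof -
  obtain y z where yz: "w = [y, z]" using w(2)
    by (cases w; cases "tl w") auto
  have "pl (eval pl ml \<rho> t) (ml (\<rho> y) (\<rho> z)) = eval pl ml \<rho> t"
  proof -
    have "wv ml \<rho> w \<in> set (map (wv ml \<rho>) (mons t))" using w(1) by simp
    from absorb_mem[OF this] show ?thesis using yz by (simp add: eval_mons)
  qed
  then show ?thesis using yz w(3) C by auto
qed

lemma short_absorb:
  assumes C: "\<forall>a b. ml a b = ml b a"
    and E: "\<forall>a b c d. pl (pl (ml a b) (ml c d)) (ml a d) = pl (ml a b) (ml c d)"
    and sh: "\<forall>w\<in>set (mons s). length w \<le> 2"
    and V: "\<forall>x. [x] \<in> set (mons s) \<longrightarrow> [x] \<in> set (mons t)"
    and W: "\<forall>x. (\<exists>w\<in>set (mons s). length w = 2 \<and> x \<in> set w) \<longrightarrow> (\<exists>w\<in>set (mons t). length w = 2 \<and> x \<in> set w)"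
  shows "pl (eval pl ml \<rho> t) (eval pl ml \<rho> s) = eval pl ml \<rho> t"
proof -
  let ?T = "eval pl ml \<rho> t"
  have "\<forall>a\<in>set (map (wv ml \<rho>) (mons s)). pl ?T a = ?T"
  proof
    fix a assume "a \<in> set (map (wv ml \<rho>) (mons s))"
    then obtain w where w: "w \<in> set (mons s)" "a = wv ml \<rho> w" by auto
    have "w \<noteq> []" using mons_words[OF w(1)] .
    moreover have "length w \<le> 2" using sh w(1) by auto
    ultimately consider x where "w = [x]" | x y where "w = [x, y]"
      by (cases w; cases "tl w") auto
    then show "pl ?T a = ?T"
    proof cases
      case 1
      then have "[x] \<in> set (mons t)" using V w(1) by auto
      then have "wv ml \<rho> [x] \<in> set (map (wv ml \<rho>) (mons t))" by (metis image_eqI list.set_map)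
      from absorb_mem[OF this] show ?thesis using w(2) 1 by (simp add: eval_mons)
    next
      case 2
      obtain w1 where w1: "w1 \<in> set (mons t)" "length w1 = 2" "x \<in> set w1"
        using W w(1) 2 by fastforce
      obtain w2 where w2: "w2 \<in> set (mons t)" "length w2 = 2" "y \<in> set w2"
        using W w(1) 2 by fastforce
      obtain p where p: "pl ?T (ml (\<rho> x) (\<rho> p)) = ?T" using pair_absorb[OF C w1] by blast
      obtain q where q: "pl ?T (ml (\<rho> y) (\<rho> q)) = ?T" using pair_absorb[OF C w2] by blast
      have q': "pl ?T (ml (\<rho> q) (\<rho> y)) = ?T" using q C by metis
      have "pl ?T (ml (\<rho> x) (\<rho> y)) = ?T"
        using absorb_step[OF p q'] E by blast
      then show ?thesis using w(2) 2 by simp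
    qed
  qed
  then show ?thesis by (simp add: eval_mons[of \<rho> s] absorb_all mons_ne)
qed

lemma A_main:
  assumes C: "\<forall>a b. ml a b = ml b a"
    and D: "\<forall>a b c d. pl (ml (ml a b) c) d = ml (ml a b) c"
    and E: "\<forall>a b c d. pl (pl (ml a b) (ml c d)) (ml a d) = pl (ml a b) (ml c d)"
    and L: "(\<exists>w\<in>set (mons s). 3 \<le> length w) \<longleftrightarrow> (\<exists>w\<in>set (mons t). 3 \<le> length w)"
    and V: "\<forall>x. [x] \<in> set (mons s) \<longleftrightarrow> [x] \<in> set (mons t)"
    and W: "\<forall>x. (\<exists>w\<in>set (mons s). length w = 2 \<and> x \<in> set w) \<longleftrightarrow> (\<exists>w\<in>set (mons t). length w = 2 \<and> x \<in> set w)"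
  shows "eval pl ml \<rho> s = eval pl ml \<rho> t"
proof (cases "\<exists>w\<in>set (mons s). 3 \<le> length w")
  case True
  then obtain w1 where "w1 \<in> set (mons s)" "3 \<le> length w1" by blast
  moreover obtain w2 where "w2 \<in> set (mons t)" "3 \<le> length w2" using True L by blast
  ultimately show ?thesis using long_eq[OF D] by metis
next
  case False
  then have sh1: "\<forall>w\<in>set (mons s). length w \<le> 2" by auto
  have sh2: "\<forall>w\<in>set (mons t). length w \<le> 2" using False L by auto
  have "pl (eval pl ml \<rho> t) (eval pl ml \<rho> s) = eval pl ml \<rho> t"
    by (rule short_absorb[OF C E sh1]) (use V W in auto)
  moreover have "pl (eval pl ml \<rho> s) (eval pl ml \<rho> t) = eval pl ml \<rho> s"
    by (rule short_absorb[OF C E sh2]) (use V W in auto)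
  ultimately show ?thesis by (metis pcomm)
qed

end


lemma S_padd_assoc: "s4_add (s4_add x y) z = s4_add x (s4_add y z)" by (cases x; cases y; cases z; simp)
lemma S_padd_comm: "s4_add x y = s4_add y x" by (cases x; cases y; simp)
lemma S_padd_idem: "s4_add x x = x" by (cases x; simp)
lemma S_mul_assoc: "s4_mul (s4_mul x y) z = s4_mul x (s4_mul y z)" by (cases x; cases y; cases z; simp)
lemma S_ldist: "s4_mul x (s4_add y z) = s4_add (s4_mul x y) (s4_mul x z)" by (cases x; cases y; cases z; simp)
lemma S_rdist: "s4_mul (s4_add x y) z = s4_add (s4_mul x z) (s4_mul y z)" by (cases x; cases y; cases z; simp)

lemma ai_S: "ai_semiring s4_add s4_mul"
  unfolding ai_semiring_def
  using S_padd_assoc S_padd_comm S_padd_idem S_mul_assoc S_ldist S_rdist by blast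

lemma S1: "E1 \<in> set xs \<Longrightarrow> sumL s4_add xs = E1"
proof (induction xs)
  case (Cons a xs)
  then show ?case
    by (cases "xs = []"; cases "a = E1") (auto simp: sumL_Cons S_padd_comm)
qed auto

lemma S2: "E4 \<in> set xs \<Longrightarrow> sumL s4_add xs \<in> {E1, E4}"
proof (induction xs)
  case (Cons a xs)
  show ?case
  proof (cases "xs = []")
    case True then show ?thesis using Cons by simp
  next
    case False
    then have e: "sumL s4_add (a # xs) = s4_add a (sumL s4_add xs)" by (simp add: sumL_Cons)
    show ?thesis
    proof (cases "a = E4")
      case True then show ?thesis using e by (cases "sumL s4_add xs") auto
    next
      case False then have "sumL s4_add xs \<in> {E1, E4}" using Cons by simp
      then show ?thesis using e by (cases a) auto
    qed
  qed
qed auto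

lemma S3: "xs \<noteq> [] \<Longrightarrow> set xs \<subseteq> {E2, E3} \<Longrightarrow> sumL s4_add xs \<in> {E2, E3}"
proof (induction xs)
  case (Cons a xs)
  then show ?case
    by (cases "xs = []") (auto simp: sumL_Cons)
qed auto

lemma S_long: "3 \<le> length w \<Longrightarrow> wv s4_mul \<rho> w = E1"
proof -
  assume "3 \<le> length w"
  then obtain x y z r where w: "w = x # y # z # r"
    by (cases w; cases "tl w"; cases "tl (tl w)") auto
  show ?thesis unfolding w
    by (simp add: wv_Cons; cases "\<rho> x"; cases "\<rho> y"; cases "wv s4_mul \<rho> (z # r)"; simp)
qed

lemma S_short_vals:
  assumes "\<forall>w\<in>set (mons t). length w \<le> 2"
    and "\<forall>w\<in>set (mons t). length w = 2 \<longrightarrow> (\<forall>y\<in>set w. \<rho> y \<in> {E2, E4})"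
    and "\<forall>y. [y] \<in> set (mons t) \<longrightarrow> \<rho> y \<in> {E2, E3}"
  shows "eval s4_add s4_mul \<rho> t \<in> {E2, E3}"
proof -
  have "set (map (wv s4_mul \<rho>) (mons t)) \<subseteq> {E2, E3}"
  proof
    fix a assume "a \<in> set (map (wv s4_mul \<rho>) (mons t))"
    then obtain w where w: "w \<in> set (mons t)" "a = wv s4_mul \<rho> w" by auto
    have "w \<noteq> []" using mons_words[OF w(1)] .
    moreover have "length w \<le> 2" using assms(1) w(1) by auto
    ultimately consider x where "w = [x]" | x y where "w = [x, y]"
      by (cases w; cases "tl w") auto
    then show "a \<in> {E2, E3}"
    proof cases
      case 1 then show ?thesis using assms(3) w by auto
    next
      case 2
      then have "\<rho> x \<in> {E2, E4}" "\<rho> y \<in> {E2, E4}" using assms(2) w(1) by auto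
      then show ?thesis using w(2) 2 by auto
    qed
  qed
  then show ?thesis using S3 mons_ne[of t] by (simp add: eval_mons[OF ai_S])
qed

lemma S_val_mem: "w \<in> set (mons t) \<Longrightarrow> wv s4_mul \<rho> w \<in> set (map (wv s4_mul \<rho>) (mons t))"
  by simp

lemma S_long_transfer:
  assumes sat: "\<forall>\<rho>. eval s4_add s4_mul \<rho> s = eval s4_add s4_mul \<rho> t"
    and w: "w \<in> set (mons s)" "3 \<le> length w"
  shows "\<exists>w\<in>set (mons t). 3 \<le> length w"
proof (rule ccontr)
  assume nl: "\<not> ?thesis"
  let ?\<rho> = "\<lambda>_::nat. E2"
  have "eval s4_add s4_mul ?\<rho> s = E1"
    using S1[OF S_val_mem[OF w(1), of ?\<rho>, unfolded S_long[OF w(2)]]]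
    by (simp add: eval_mons[OF ai_S])
  moreover have "eval s4_add s4_mul ?\<rho> t \<in> {E2, E3}"
    by (rule S_short_vals) (use nl in auto)
  ultimately show False using sat by (metis empty_iff insert_iff s4.distinct(1,3))
qed

lemma S_V_transfer:
  assumes sat: "\<forall>\<rho>. eval s4_add s4_mul \<rho> s = eval s4_add s4_mul \<rho> t"
    and sht: "\<forall>w\<in>set (mons t). length w \<le> 2"
    and x: "[x] \<in> set (mons s)"
  shows "[x] \<in> set (mons t)"
proof (rule ccontr)
  assume nx: "\<not> ?thesis"
  let ?\<rho> = "(\<lambda>_::nat. E2)(x := E4)"
  have "E4 \<in> set (map (wv s4_mul ?\<rho>) (mons s))" using S_val_mem[OF x, of ?\<rho>] by simp
  then have "eval s4_add s4_mul ?\<rho> s \<in> {E1, E4}"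
    using S2 by (simp add: eval_mons[OF ai_S])
  moreover have "eval s4_add s4_mul ?\<rho> t \<in> {E2, E3}"
    by (rule S_short_vals) (use sht nx in auto)
  ultimately show False using sat by (metis empty_iff insert_iff s4.distinct)
qed

lemma S_W_transfer:
  assumes sat: "\<forall>\<rho>. eval s4_add s4_mul \<rho> s = eval s4_add s4_mul \<rho> t"
    and sht: "\<forall>w\<in>set (mons t). length w \<le> 2"
    and w: "w \<in> set (mons s)" "length w = 2" "x \<in> set w"
  shows "\<exists>w\<in>set (mons t). length w = 2 \<and> x \<in> set w"
proof (rule ccontr)
  assume nx: "\<not> ?thesis"
  let ?\<rho> = "(\<lambda>_::nat. E2)(x := E3)"
  obtain y z where yz: "w = [y, z]" using w(2) by (cases w; cases "tl w") auto
  have "wv s4_mul ?\<rho> w = E1" using yz w(3)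
    by (cases "y = x"; cases "z = x") auto
  then have "E1 \<in> set (map (wv s4_mul ?\<rho>) (mons s))" using S_val_mem[OF w(1), of ?\<rho>] by simp
  then have "eval s4_add s4_mul ?\<rho> s = E1"
    using S1 by (simp add: eval_mons[OF ai_S])
  moreover have "eval s4_add s4_mul ?\<rho> t \<in> {E2, E3}"
  proof (rule S_short_vals)
    show "\<forall>w\<in>set (mons t). length w \<le> 2" by fact
    show "\<forall>w\<in>set (mons t). length w = 2 \<longrightarrow> (\<forall>y\<in>set w. ?\<rho> y \<in> {E2, E4})"
      using nx by auto
    show "\<forall>y. [y] \<in> set (mons t) \<longrightarrow> ?\<rho> y \<in> {E2, E3}" by auto
  qed
  ultimately show False using sat by (metis empty_iff insert_iff s4.distinct)
qed

lemma S_sat_imp: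
  assumes ai: "ai_semiring pl ml"
    and C: "\<forall>a b. ml a b = ml b a"
    and D: "\<forall>a b c d. pl (ml (ml a b) c) d = ml (ml a b) c"
    and E: "\<forall>a b c d. pl (pl (ml a b) (ml c d)) (ml a d) = pl (ml a b) (ml c d)"
    and sat: "\<forall>\<rho>. eval s4_add s4_mul \<rho> s = eval s4_add s4_mul \<rho> t"
  shows "eval pl ml \<rho> s = eval pl ml \<rho> t"
proof -
  have sat': "\<forall>\<rho>. eval s4_add s4_mul \<rho> t = eval s4_add s4_mul \<rho> s" using sat by simp
  have L: "(\<exists>w\<in>set (mons s). 3 \<le> length w) \<longleftrightarrow> (\<exists>w\<in>set (mons t). 3 \<le> length w)"
    using S_long_transfer[OF sat] S_long_transfer[OF sat'] by blast
  show ?thesis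
  proof (cases "\<exists>w\<in>set (mons s). 3 \<le> length w")
    case True
    then obtain w1 where "w1 \<in> set (mons s)" "3 \<le> length w1" by blast
    moreover obtain w2 where "w2 \<in> set (mons t)" "3 \<le> length w2" using True L by blast
    ultimately show ?thesis using long_eq[OF ai D] by metis
  next
    case False
    then have sh1: "\<forall>w\<in>set (mons s). length w \<le> 2" by auto
    have sh2: "\<forall>w\<in>set (mons t). length w \<le> 2" using False L by auto
    have V: "\<forall>x. [x] \<in> set (mons s) \<longleftrightarrow> [x] \<in> set (mons t)"
      using S_V_transfer[OF sat sh2] S_V_transfer[OF sat' sh1] by blast
    have W: "\<forall>x. (\<exists>w\<in>set (mons s). length w = 2 \<and> x \<in> set w) \<longleftrightarrow> (\<exists>w\<in>set (mons t). length w = 2 \<and> x \<in> set w)"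
      using S_W_transfer[OF sat sh2] S_W_transfer[OF sat' sh1] by blast
    show ?thesis using A_main[OF ai C D E L V W] .
  qed
qed

theorem proposition5p5:
  fixes pl ml :: "'a \<Rightarrow> 'a \<Rightarrow> 'a"
  shows "in_V_S4 pl ml \<longleftrightarrow> (ai_semiring pl ml \<and> (\<forall>e\<in>Sigma_414. satisfies pl ml e))"
proof
  assume V: "in_V_S4 pl ml"
  let ?r3 = "\<lambda>x y z (n::nat). if n = 0 then x else if n = 1 then y else z"
  have tr: "\<And>e. satisfies s4_add s4_mul e \<Longrightarrow> satisfies pl ml e"
    using V unfolding in_V_S4_def by blast
  have i1: "satisfies pl ml (Pl (Pl (Var 0) (Var 1)) (Var 2), Pl (Var 0) (Pl (Var 1) (Var 2)))"
    by (rule tr) (simp add: satisfies_def S_padd_assoc)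
  have i2: "satisfies pl ml (Pl (Var 0) (Var 1), Pl (Var 1) (Var 0))"
    by (rule tr) (simp add: satisfies_def S_padd_comm)
  have i3: "satisfies pl ml (Pl (Var 0) (Var 0), Var 0)"
    by (rule tr) (simp add: satisfies_def S_padd_idem)
  have i4: "satisfies pl ml (Ml (Ml (Var 0) (Var 1)) (Var 2), Ml (Var 0) (Ml (Var 1) (Var 2)))"
    by (rule tr) (simp add: satisfies_def S_mul_assoc)
  have i5: "satisfies pl ml (Ml (Var 0) (Pl (Var 1) (Var 2)), Pl (Ml (Var 0) (Var 1)) (Ml (Var 0) (Var 2)))"
    by (rule tr) (simp add: satisfies_def S_ldist)
  have i6: "satisfies pl ml (Ml (Pl (Var 0) (Var 1)) (Var 2), Pl (Ml (Var 0) (Var 2)) (Ml (Var 1) (Var 2)))"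
    by (rule tr) (simp add: satisfies_def S_rdist)
  have "ai_semiring pl ml"
    unfolding ai_semiring_def
  proof (intro conjI allI)
    fix x y z
    show "pl (pl x y) z = pl x (pl y z)" using i1 unfolding satisfies_def
      by (drule_tac x="?r3 x y z" in spec) simp
    show "pl x y = pl y x" using i2 unfolding satisfies_def
      by (drule_tac x="?r3 x y z" in spec) simp
    show "pl x x = x" using i3 unfolding satisfies_def
      by (drule_tac x="?r3 x y z" in spec) simp
    show "ml (ml x y) z = ml x (ml y z)" using i4 unfolding satisfies_def
      by (drule_tac x="?r3 x y z" in spec) simp
    show "ml x (pl y z) = pl (ml x y) (ml x z)" using i5 unfolding satisfies_def
      by (drule_tac x="?r3 x y z" in spec) simp
    show "ml (pl x y) z = pl (ml x z) (ml y z)" using i6 unfolding satisfies_def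
      by (drule_tac x="?r3 x y z" in spec) simp
  qed
  moreover have "\<forall>e\<in>Sigma_414. satisfies pl ml e"
  proof
    fix e assume "e \<in> Sigma_414"
    then have "satisfies s4_add s4_mul e"
      unfolding Sigma_414_def satisfies_def
      by (auto; case_tac "\<rho> 1"; case_tac "\<rho> 2"; case_tac "\<rho> 3"; case_tac "\<rho> 4"; simp)
    then show "satisfies pl ml e" by (rule tr)
  qed
  ultimately show "ai_semiring pl ml \<and> (\<forall>e\<in>Sigma_414. satisfies pl ml e)" ..
next
  assume H: "ai_semiring pl ml \<and> (\<forall>e\<in>Sigma_414. satisfies pl ml e)"
  then have ai: "ai_semiring pl ml" by blast
  let ?r4 = "\<lambda>a b c d (n::nat). if n = 1 then a else if n = 2 then b else if n = 3 then c else d"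
  have s1: "satisfies pl ml (Ml (Var 1) (Var 2), Ml (Var 2) (Var 1))"
    and s2: "satisfies pl ml (Ml (Ml (Var 1) (Var 2)) (Var 3), Pl (Ml (Ml (Var 1) (Var 2)) (Var 3)) (Var 4))"
    and s3: "satisfies pl ml (Pl (Ml (Var 1) (Var 2)) (Ml (Var 3) (Var 4)),
      Pl (Pl (Ml (Var 1) (Var 2)) (Ml (Var 3) (Var 4))) (Ml (Var 1) (Var 4)))"
    using H unfolding Sigma_414_def by auto
  have C: "\<forall>a b. ml a b = ml b a"
  proof (intro allI)
    fix a b show "ml a b = ml b a" using s1 unfolding satisfies_def
      by (drule_tac x="?r4 a b a a" in spec) simp
  qed
  have D: "\<forall>a b c d. pl (ml (ml a b) c) d = ml (ml a b) c"
  proof (intro allI)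
    fix a b c d show "pl (ml (ml a b) c) d = ml (ml a b) c" using s2 unfolding satisfies_def
      by (drule_tac x="?r4 a b c d" in spec) simp
  qed
  have E: "\<forall>a b c d. pl (pl (ml a b) (ml c d)) (ml a d) = pl (ml a b) (ml c d)"
  proof (intro allI)
    fix a b c d show "pl (pl (ml a b) (ml c d)) (ml a d) = pl (ml a b) (ml c d)" using s3 unfolding satisfies_def
      by (drule_tac x="?r4 a b c d" in spec) simp
  qed
  show "in_V_S4 pl ml"
    unfolding in_V_S4_def
  proof (intro allI impI)
    fix e :: "trm \<times> trm"
    assume "satisfies s4_add s4_mul e"
    then have sat: "\<forall>\<rho>. eval s4_add s4_mul \<rho> (fst e) = eval s4_add s4_mul \<rho> (snd e)"
      unfolding satisfies_def by blast
    show "satisfies pl ml e" unfolding satisfies_def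
      using S_sat_imp[OF ai C D E sat] by blast
  qed
qed

end
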